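(* Let $\bm v_1, \dots, \bm v_N \in \mathbb{R}^{r}$, let $\bm X := \mathsf{Gram}(\bm v_1, \dots, \bm v_N)$, let $\bm V \in \mathbb{R}^{r \times N}$ have columns $\bm v_1,\dots,\bm v_N$, and let $\bm v := \mathrm{vec}(\bm V) \in \mathbb{R}^{rN}$. Then $\bm X \in \mathscr{E}_4^N$ if and only if $\sum_{i=1}^N \|\bm v_i\|_2^2 = N$ and there exists $\bm M \in \mathcal{B}(N, r)$ with $\bm v^\top \bm M \bm v = N^2$. Moreover: (a) if $\bm X \in \mathscr{E}_4^N$ and $\bm Y$ is any degree 4 pseudomoment matrix extending $\bm X$, then there exists $\bm M \in \mathcal{B}(N,r)$ with $\bm v^\top \bm M \bm v = N^2$ and $$Y_{(ij)(k\ell)} = \bm v_i^\top \bm M_{[jk]} \bm v_\ell \quad \text{for all } i,j,k,\ell \in [N].$$ (b) Conversely, if $\sum_{i=1}^N\|\bm v_i\|_2^2 = N$ and $\bm M \in \mathcal{B}(N,r)$ satisfies $\bm v^\top \bm M \bm v = N^2$, then the matrix $\bm Y \in \mathbb{R}^{N^2\times N^2}$ with entries $Y_{(ij)(k\ell)} := \bm v_i^\top \bm M_{[jk]} \bm v_\ell$ is a degree 4 pseudomoment matrix extending $\bm X$.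
   Context: $[N] = \{1,\dots,N\}$. For $\bm v_1,\dots,\bm v_N$, $\mathsf{Gram}(\bm v_1,\dots,\bm v_N)$ is the $N\times N$ matrix with entries $\langle \bm v_i, \bm v_j\rangle$. For $\bm V \in \mathbb{R}^{r\times N}$ with columns $\bm v_i$, $\mathrm{vec}(\bm V) \in \mathbb{R}^{rN}$ is the concatenation $(\bm v_1; \dots; \bm v_N)$. A matrix $\bm M \in \mathbb{R}^{rN\times rN}$ is viewed as an $N\times N$ array of $r\times r$ blocks, $\bm M_{[ij]}$ denoting block $(i,j)$. $\mathcal{B}(N,r)$ is the set of symmetric $\bm M \in \mathbb{R}^{rN\times rN}$ with $\bm M \succeq 0$, $\bm M_{[ii]} = \bm I_r$ for all $i$, and $\bm M_{[ij]} = \bm M_{[ij]}^\top$ for all $i,j$. A degree 4 pseudomoment matrix is a matrix $\bm Y \in \mathbb{R}^{N^2\times N^2}$, rows and columns indexed by pairs $(ij)\in[N]^2$ (lexicographically ordered), such that: (1) $\bm Y\succeq 0$; (2) $Y_{(ij)(kk)}$ does not depend on $k$; (3) $Y_{(ii)(ii)} = 1$ for all $i$; (4) $Y_{(ij)(k\ell)}$ is invariant under all permutations of the four indices $i,j,k,\ell$. Such $\bm Y$ extends $\bm X\in\mathbb{R}^{N\times N}_{\mathrm{sym}}$ if $Y_{(1i)(1j)} = X_{ij}$ for all $i,j$. $\mathscr{E}_4^N$ is the set of symmetric $\bm X \in \mathbb{R}^{N\times N}$ that are extended by some degree 4 pseudomoment matrix. *)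

theory Defs
  imports "HOL-Analysis.Analysis" "HOL-Combinatorics.Permutations"
begin

text \<open>Index sets are [n] = {1..n}. A vector in R^r is a function nat => real
  (only indices in {1..r} matter). Matrices indexed by a finite index set I
  are functions I => I => real.\<close>

definition psd_on :: "'i set \<Rightarrow> ('i \<Rightarrow> 'i \<Rightarrow> real) \<Rightarrow> bool" where
  "psd_on I A \<longleftrightarrow>
     (\<forall>i\<in>I. \<forall>j\<in>I. A i j = A j i) \<and>
     (\<forall>x :: 'i \<Rightarrow> real. 0 \<le> (\<Sum>i\<in>I. \<Sum>j\<in>I. x i * A i j * x j))"

definition gram :: "nat \<Rightarrow> (nat \<Rightarrow> nat \<Rightarrow> real) \<Rightarrow> nat \<Rightarrow> nat \<Rightarrow> real" where
  "gram r v i j = (\<Sum>a\<in>{1..r}. v i a * v j a)"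

definition pseudomoment4 :: "nat \<Rightarrow> (nat \<times> nat \<Rightarrow> nat \<times> nat \<Rightarrow> real) \<Rightarrow> bool" where
  "pseudomoment4 N Y \<longleftrightarrow>
     psd_on ({1..N} \<times> {1..N}) Y \<and>
     (\<forall>i\<in>{1..N}. \<forall>j\<in>{1..N}. \<forall>k\<in>{1..N}. \<forall>k'\<in>{1..N}.
        Y (i,j) (k,k) = Y (i,j) (k',k')) \<and>
     (\<forall>i\<in>{1..N}. Y (i,i) (i,i) = 1) \<and>
     (\<forall>i\<in>{1..N}. \<forall>j\<in>{1..N}. \<forall>k\<in>{1..N}. \<forall>l\<in>{1..N}. \<forall>p. p permutes {..<4::nat} \<longrightarrow>
        (let w = (\<lambda>n. [i,j,k,l] ! n) in
          Y (w (p 0), w (p 1)) (w (p 2), w (p 3)) = Y (i,j) (k,l)))"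

definition extends4 :: "nat \<Rightarrow> (nat \<times> nat \<Rightarrow> nat \<times> nat \<Rightarrow> real) \<Rightarrow> (nat \<Rightarrow> nat \<Rightarrow> real) \<Rightarrow> bool" where
  "extends4 N Y X \<longleftrightarrow> (\<forall>i\<in>{1..N}. \<forall>j\<in>{1..N}. Y (1,i) (1,j) = X i j)"

definition E4 :: "nat \<Rightarrow> (nat \<Rightarrow> nat \<Rightarrow> real) set" where
  "E4 N = {X. (\<forall>i\<in>{1..N}. \<forall>j\<in>{1..N}. X i j = X j i) \<and>
              (\<exists>Y. pseudomoment4 N Y \<and> extends4 N Y X)}"

text \<open>B(N,r): a matrix in R^{rN x rN} viewed as an N x N array of r x r blocks;
  entry M (i,a) (j,b) is entry (a,b) of block M_[ij] (row index (i,a) corresponds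
  to position (i-1)r + a, consistent with vec).\<close>
definition Bset :: "nat \<Rightarrow> nat \<Rightarrow> (nat \<times> nat \<Rightarrow> nat \<times> nat \<Rightarrow> real) set" where
  "Bset N r = {M. psd_on ({1..N} \<times> {1..r}) M \<and>
      (\<forall>i\<in>{1..N}. \<forall>a\<in>{1..r}. \<forall>b\<in>{1..r}. M (i,a) (i,b) = (if a = b then 1 else 0)) \<and>
      (\<forall>i\<in>{1..N}. \<forall>j\<in>{1..N}. \<forall>a\<in>{1..r}. \<forall>b\<in>{1..r}. M (i,a) (j,b) = M (i,b) (j,a))}"

definition quadvec :: "nat \<Rightarrow> nat \<Rightarrow> (nat \<Rightarrow> nat \<Rightarrow> real) \<Rightarrow> (nat \<times> nat \<Rightarrow> nat \<times> nat \<Rightarrow> real) \<Rightarrow> real" where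
  "quadvec N r v M = (\<Sum>p\<in>{1..N} \<times> {1..r}. \<Sum>q\<in>{1..N} \<times> {1..r}.
      v (fst p) (snd p) * M p q * v (fst q) (snd q))"

definition blockform :: "nat \<Rightarrow> (nat \<Rightarrow> nat \<Rightarrow> real) \<Rightarrow> (nat \<times> nat \<Rightarrow> nat \<times> nat \<Rightarrow> real)
    \<Rightarrow> nat \<Rightarrow> nat \<Rightarrow> nat \<Rightarrow> nat \<Rightarrow> real" where
  "blockform r v M i j k l = (\<Sum>a\<in>{1..r}. \<Sum>b\<in>{1..r}. v i a * M (j,a) (k,b) * v l b)"

end

theory Submission
  imports Defs
begin


definition qf :: "'i set \<Rightarrow> ('i \<Rightarrow> 'i \<Rightarrow> real) \<Rightarrow> ('i \<Rightarrow> real) \<Rightarrow> ('i \<Rightarrow> real) \<Rightarrow> real" where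
  "qf S A x y = (\<Sum>i\<in>S. \<Sum>j\<in>S. x i * A i j * y j)"

lemma qf_expand:
  "qf S A (\<lambda>i. x i + t * d i) (\<lambda>i. x i + t * d i) =
   qf S A x x + t * qf S A x d + t * qf S A d x + t\<^sup>2 * qf S A d d"
  unfolding qf_def by (simp add: ring_distribs sum.distrib sum_distrib_left power2_eq_square mult.assoc mult.left_commute)

lemma qf_diff:
  "qf S A (\<lambda>i. x i - y i) (\<lambda>i. x i - y i) =
   qf S A x x - qf S A x y - qf S A y x + qf S A y y"
  by (simp add: qf_def algebra_simps sum.distrib sum_subtractf)

lemma delta_r:
  assumes "finite S" "p \<in> S"
  shows "(\<Sum>j\<in>S. f j * (if j = p then 1 else 0)) = (f p :: real)"
proof -
  have "(\<Sum>j\<in>S. f j * (if j = p then 1 else 0)) = (\<Sum>j\<in>S. if j = p then f j else 0)"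
    by (rule sum.cong) auto
  then show ?thesis using assms by simp
qed

lemma qf_delta_right:
  assumes "finite S" "p \<in> S"
  shows "qf S A x (\<lambda>i. if i = p then 1 else 0) = (\<Sum>i\<in>S. x i * A i p)"
  using assms by (simp add: qf_def if_distrib cong: if_cong)

lemma qf_delta_left:
  assumes "finite S" "p \<in> S"
  shows "qf S A (\<lambda>i. if i = p then 1 else 0) x = (\<Sum>j\<in>S. A p j * x j)"
proof -
  have "qf S A (\<lambda>i. if i = p then 1 else 0) x = (\<Sum>i\<in>S. if i = p then (\<Sum>j\<in>S. A i j * x j) else 0)"
    unfolding qf_def by (rule sum.cong) auto
  then show ?thesis using assms by simp
qed

lemma psd_kernel:
  assumes psd: "psd_on S A" and fin: "finite S" and z: "qf S A x x = 0" and p: "p \<in> S"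
  shows "(\<Sum>q\<in>S. A p q * x q) = 0"
proof -
  define d where "d = (\<lambda>i. if i = p then 1 else (0::real))"
  define g where "g = (\<Sum>q\<in>S. A p q * x q)"
  define m where "m = A p p"
  have sym: "\<And>i j. i \<in> S \<Longrightarrow> j \<in> S \<Longrightarrow> A i j = A j i" using psd by (auto simp: psd_on_def)
  have nn: "\<And>y. 0 \<le> qf S A y y" using psd by (auto simp: psd_on_def qf_def)
  have xd: "qf S A x d = g"
  proof -
    have "qf S A x d = (\<Sum>i\<in>S. x i * A i p)" unfolding d_def using fin p by (rule qf_delta_right)
    also have "\<dots> = g" unfolding g_def by (intro sum.cong refl) (metis sym p mult.commute)
    finally show ?thesis .
  qed
  have dx: "qf S A d x = g" unfolding d_def g_def by (rule qf_delta_left[OF fin p])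
  have dd: "qf S A d d = m" unfolding d_def m_def using fin p by (simp add: qf_delta_left delta_r)
  have m0: "0 \<le> m" using nn[of d] dd by simp
  have key: "\<And>t. 0 \<le> 2 * t * g + t\<^sup>2 * m"
  proof -
    fix t
    have "0 \<le> qf S A (\<lambda>i. x i + t * d i) (\<lambda>i. x i + t * d i)" by (rule nn)
    then show "0 \<le> 2 * t * g + t\<^sup>2 * m" using qf_expand[of S A x t d] xd dx dd z by (simp add: mult_ac)
  qed
  define s where "s = 1 / (m + 1)"
  have s0: "0 < s" using m0 by (simp add: s_def)
  have sm: "s * m < 1" using m0 by (simp add: s_def field_simps)
  have "0 \<le> 2 * (- s * g) * g + (- s * g)\<^sup>2 * m" by (rule key)
  also have "\<dots> = s * g\<^sup>2 * (s * m - 2)" by (simp add: algebra_simps power2_eq_square)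
  finally have h: "0 \<le> s * g\<^sup>2 * (s * m - 2)" .
  have "s * g\<^sup>2 * (s * m - 2) \<le> 0"
    using s0 sm by (simp add: mult_nonneg_nonpos)
  with h have "s * g\<^sup>2 * (s * m - 2) = 0" by linarith
  then have "g\<^sup>2 = 0" using s0 sm by auto
  then show ?thesis by (simp add: g_def)
qed


lemma perm4_closure:
  fixes F :: "nat \<Rightarrow> nat \<Rightarrow> nat \<Rightarrow> nat \<Rightarrow> real"
  assumes s01: "\<And>i j k l. i \<in> I \<Longrightarrow> j \<in> I \<Longrightarrow> k \<in> I \<Longrightarrow> l \<in> I \<Longrightarrow> F j i k l = F i j k l"
    and s12: "\<And>i j k l. i \<in> I \<Longrightarrow> j \<in> I \<Longrightarrow> k \<in> I \<Longrightarrow> l \<in> I \<Longrightarrow> F i k j l = F i j k l"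
    and s23: "\<And>i j k l. i \<in> I \<Longrightarrow> j \<in> I \<Longrightarrow> k \<in> I \<Longrightarrow> l \<in> I \<Longrightarrow> F i j l k = F i j k l"
    and p: "p permutes {..<4::nat}"
  shows "\<forall>i\<in>I. \<forall>j\<in>I. \<forall>k\<in>I. \<forall>l\<in>I.
     F ([i,j,k,l] ! p 0) ([i,j,k,l] ! p 1) ([i,j,k,l] ! p 2) ([i,j,k,l] ! p 3) = F i j k l"
  using p finite_lessThan[of 4]
proof (induction rule: permutes_induct)
  case id
  then show ?case by (simp add: numeral_eq_Suc)
next
  case (swap a b p)
  show ?case
  proof (intro ballI)
    fix i j k l assume ijkl: "i \<in> I" "j \<in> I" "k \<in> I" "l \<in> I"
    define t where "t = Transposition.transpose a b"
    define w where "w = (\<lambda>n. [i,j,k,l] ! n)"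
    define i' where "i' = w (t 0)"
    define j' where "j' = w (t 1)"
    define k' where "k' = w (t 2)"
    define l' where "l' = w (t 3)"
    have tlt: "\<And>m. m < 4 \<Longrightarrow> t m < 4" using swap(1,2) by (auto simp: t_def Transposition.transpose_def)
    have w2: "\<And>m. m < 4 \<Longrightarrow> [i',j',k',l'] ! m = w (t m)"
    proof -
      fix m :: nat assume "m < 4"
      then have "m = 0 \<or> m = 1 \<or> m = 2 \<or> m = 3" by auto
      then show "[i',j',k',l'] ! m = w (t m)" by (auto simp: i'_def j'_def k'_def l'_def)
    qed
    have wI: "\<And>m. m < 4 \<Longrightarrow> w m \<in> I"
    proof -
      fix m :: nat assume "m < 4"
      then have "m = 0 \<or> m = 1 \<or> m = 2 \<or> m = 3" by auto
      then show "w m \<in> I" using ijkl by (auto simp: w_def)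
    qed
    have I': "i' \<in> I" "j' \<in> I" "k' \<in> I" "l' \<in> I"
      using wI tlt by (auto simp: i'_def j'_def k'_def l'_def)
    have pp: "p permutes {..<4::nat}" using swap by blast
    have pl: "\<And>m. m < 4 \<Longrightarrow> p m < 4" using permutes_in_image[OF pp] by (metis lessThan_iff)
    have IH: "F ([i',j',k',l'] ! p 0) ([i',j',k',l'] ! p 1) ([i',j',k',l'] ! p 2) ([i',j',k',l'] ! p 3) = F i' j' k' l'"
      using swap I' by blast
    have e: "\<And>m. m < 4 \<Longrightarrow> [i,j,k,l] ! ((t \<circ> p) m) = [i',j',k',l'] ! p m"
      using w2 pl by (simp add: w_def)
    have s03: "\<And>i j k l. i \<in> I \<Longrightarrow> j \<in> I \<Longrightarrow> k \<in> I \<Longrightarrow> l \<in> I \<Longrightarrow> F l j k i = F i j k l"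
    proof -
      fix i j k l assume h: "i \<in> I" "j \<in> I" "k \<in> I" "l \<in> I"
      have "F l j k i = F j l k i" using s01[of l j k i] h by simp
      also have "\<dots> = F j k l i" using s12[of j l k i] h by simp
      also have "\<dots> = F j k i l" using s23[of j k l i] h by simp
      also have "\<dots> = F j i k l" using s12[of j i k l] h by simp
      also have "\<dots> = F i j k l" using s01[of i j k l] h by simp
      finally show "F l j k i = F i j k l" .
    qed
    have s02: "F k j i l = F i j k l"
    proof -
      have "F k j i l = F j k i l" using s01[of j k i l] ijkl by simp
      also have "\<dots> = F j i k l" using s12[of j i k l] ijkl by simp
      also have "\<dots> = F i j k l" using s01[of i j k l] ijkl by simp
      finally show ?thesis .
    qed
    have s13: "F i l k j = F i j k l"
    proof -
      have "F i l k j = F i k l j" using s12[of i k l j] ijkl by simp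
      also have "\<dots> = F i k j l" using s23[of i k j l] ijkl by simp
      also have "\<dots> = F i j k l" using s12[of i j k l] ijkl by simp
      finally show ?thesis .
    qed
    note facts = s01[OF ijkl] s12[OF ijkl] s23[OF ijkl] s03[OF ijkl] s02 s13
    have ab: "a < 4" "b < 4" using swap(1,2) by auto
    have cases: "(a=0\<and>b=1) \<or> (a=1\<and>b=0) \<or> (a=0\<and>b=2) \<or> (a=2\<and>b=0) \<or> (a=0\<and>b=3) \<or> (a=3\<and>b=0) \<or>
       (a=1\<and>b=2) \<or> (a=2\<and>b=1) \<or> (a=1\<and>b=3) \<or> (a=3\<and>b=1) \<or> (a=2\<and>b=3) \<or> (a=3\<and>b=2)"
      using ab swap(3) by presburger
    have "F i' j' k' l' = F i j k l"
      using cases unfolding i'_def j'_def k'_def l'_def t_def w_def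
      by (elim disjE) (simp_all add: Transposition.transpose_def facts)
    then show "F ([i,j,k,l] ! (t \<circ> p) 0) ([i,j,k,l] ! (t \<circ> p) 1) ([i,j,k,l] ! (t \<circ> p) 2) ([i,j,k,l] ! (t \<circ> p) 3) = F i j k l"
      using IH e[of 0] e[of 1] e[of 2] e[of 3] by simp
  qed
qed


lemma sum_prod: "(\<Sum>p\<in>A\<times>B. f p) = (\<Sum>a\<in>A. \<Sum>b\<in>B. f (a,b))"
  by (simp add: sum.cartesian_product)

definition bv :: "nat \<Rightarrow> (nat \<Rightarrow> real) \<Rightarrow> nat \<times> nat \<Rightarrow> real" where
  "bv j u p = (if fst p = j then u (snd p) else 0)"

lemma sum_bv_right:
  assumes "finite I" "j \<in> I"
  shows "(\<Sum>p\<in>I\<times>R. f p * bv j u p) = (\<Sum>b\<in>R. f (j,b) * u b)"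
proof -
  have "(\<Sum>p\<in>I\<times>R. f p * bv j u p) = (\<Sum>i\<in>I. \<Sum>b\<in>R. f (i,b) * bv j u (i,b))" by (rule sum_prod)
  also have "\<dots> = (\<Sum>i\<in>I. if i = j then (\<Sum>b\<in>R. f (i,b) * u b) else 0)"
    by (rule sum.cong) (auto simp: bv_def)
  finally show ?thesis using assms by simp
qed

lemma sum_bv_left:
  assumes "finite I" "j \<in> I"
  shows "(\<Sum>p\<in>I\<times>R. bv j u p * f p) = (\<Sum>b\<in>R. u b * f (j,b))"
  using sum_bv_right[OF assms, where R=R and f=f and u=u] by (simp add: mult.commute)

lemma qf_bv:
  assumes "finite I" "j \<in> I" "k \<in> I"
  shows "qf (I\<times>R) M (bv j u) (bv k w) = (\<Sum>a\<in>R. \<Sum>b\<in>R. u a * M (j,a) (k,b) * w b)"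
proof -
  have "qf (I\<times>R) M (bv j u) (bv k w) = (\<Sum>p\<in>I\<times>R. bv j u p * (\<Sum>q\<in>I\<times>R. M p q * bv k w q))"
    unfolding qf_def by (simp add: sum_distrib_left mult.assoc)
  also have "\<dots> = (\<Sum>p\<in>I\<times>R. bv j u p * (\<Sum>b\<in>R. M p (k,b) * w b))"
    using assms by (simp add: sum_bv_right)
  also have "\<dots> = (\<Sum>a\<in>R. u a * (\<Sum>b\<in>R. M (j,a) (k,b) * w b))"
    using assms by (simp add: sum_bv_left)
  finally show ?thesis by (simp add: sum_distrib_left mult.assoc)
qed

lemma row_bv_diff:
  assumes "finite I" "j \<in> I" "k \<in> I"
  shows "(\<Sum>q\<in>I\<times>R. M p q * (bv j u q - bv k w q)) =
    (\<Sum>b\<in>R. M p (j,b) * u b) - (\<Sum>b\<in>R. M p (k,b) * w b)"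
  using assms by (simp add: right_diff_distrib sum_subtractf sum_bv_right)


lemma delta2:
  assumes "finite R"
  shows "(\<Sum>a\<in>R. \<Sum>b\<in>R. u a * (if a = b then 1 else 0) * w b) = (\<Sum>a\<in>R. u a * w a :: real)"
proof (rule sum.cong[OF refl])
  fix a assume "a \<in> R"
  have "(\<Sum>b\<in>R. u a * (if a = b then 1 else 0) * w b) = (\<Sum>b\<in>R. if a = b then u a * w b else 0)"
    by (rule sum.cong) auto
  then show "(\<Sum>b\<in>R. u a * (if a = b then 1 else 0) * w b) = u a * w a" using assms \<open>a \<in> R\<close> by simp
qed

lemma delta1:
  assumes "finite R" "a \<in> R"
  shows "(\<Sum>b\<in>R. (if a = b then 1 else 0) * w b) = (w a :: real)"
proof -
  have "(\<Sum>b\<in>R. (if a = b then 1 else 0) * w b) = (\<Sum>b\<in>R. if a = b then w b else 0)"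
    by (rule sum.cong) auto
  then show ?thesis using assms by simp
qed

lemma Bset_facts:
  assumes "M \<in> Bset N r"
  shows "psd_on ({1..N}\<times>{1..r}) M"
    and "\<And>p q. p \<in> {1..N}\<times>{1..r} \<Longrightarrow> q \<in> {1..N}\<times>{1..r} \<Longrightarrow> M p q = M q p"
    and "\<And>i a b. i \<in> {1..N} \<Longrightarrow> a \<in> {1..r} \<Longrightarrow> b \<in> {1..r} \<Longrightarrow> M (i,a) (i,b) = (if a = b then 1 else 0)"
    and "\<And>i j a b. i \<in> {1..N} \<Longrightarrow> j \<in> {1..N} \<Longrightarrow> a \<in> {1..r} \<Longrightarrow> b \<in> {1..r} \<Longrightarrow> M (i,a) (j,b) = M (i,b) (j,a)"
  using assms unfolding Bset_def psd_on_def by blast+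

lemma quadvec_nested:
  "quadvec N r v M = (\<Sum>j\<in>{1..N}. \<Sum>k\<in>{1..N}. \<Sum>a\<in>{1..r}. \<Sum>b\<in>{1..r}. v j a * M (j,a) (k,b) * v k b)"
proof -
  have "quadvec N r v M = (\<Sum>j\<in>{1..N}. \<Sum>a\<in>{1..r}. \<Sum>k\<in>{1..N}. \<Sum>b\<in>{1..r}. v j a * M (j,a) (k,b) * v k b)"
    unfolding quadvec_def sum_prod by simp
  also have "\<dots> = (\<Sum>j\<in>{1..N}. \<Sum>k\<in>{1..N}. \<Sum>a\<in>{1..r}. \<Sum>b\<in>{1..r}. v j a * M (j,a) (k,b) * v k b)"
    by (rule sum.cong[OF refl], rule sum.swap)
  finally show ?thesis .
qed

lemma partb_A:
  assumes nsum: "(\<Sum>i\<in>{1..N}. \<Sum>a\<in>{1..r}. (v i a)\<^sup>2) = real N" and MB: "M \<in> Bset N r"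
    and Q: "quadvec N r v M = (real N)\<^sup>2"
  shows "\<And>j k a. j \<in> {1..N} \<Longrightarrow> k \<in> {1..N} \<Longrightarrow> a \<in> {1..r} \<Longrightarrow> (\<Sum>b\<in>{1..r}. M (j,a) (k,b) * v k b) = v j a"
    and "\<And>j. j \<in> {1..N} \<Longrightarrow> (\<Sum>a\<in>{1..r}. v j a * v j a) = 1"
proof -
  define I where "I = {1..N}"
  define R where "R = {1..r}"
  have fI: "finite I" and fR: "finite R" by (auto simp: I_def R_def)
  note BF = Bset_facts[OF MB, folded I_def R_def]
  define n where "n j = (\<Sum>a\<in>R. v j a * v j a)" for j
  define t where "t j k = (\<Sum>a\<in>R. \<Sum>b\<in>R. v j a * M (j,a) (k,b) * v k b)" for j k
  define x where "x j k = (\<lambda>p. bv j (v j) p - bv k (v k) p)" for j k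
  have qfx: "qf (I\<times>R) M (x j k) (x j k) = n j - t j k - t k j + n k" if "j \<in> I" "k \<in> I" for j k
  proof -
    have "qf (I\<times>R) M (bv j (v j)) (bv j (v j)) = n j"
      using that fI fR by (simp add: qf_bv BF(3) delta2 n_def)
    moreover have "qf (I\<times>R) M (bv k (v k)) (bv k (v k)) = n k"
      using that fI fR by (simp add: qf_bv BF(3) delta2 n_def)
    ultimately show ?thesis unfolding x_def qf_diff using that fI by (simp add: qf_bv t_def)
  qed
  have le: "0 \<le> n j - t j k - t k j + n k" if "j \<in> I" "k \<in> I" for j k
  proof -
    have "0 \<le> qf (I\<times>R) M (x j k) (x j k)" using BF(1) unfolding psd_on_def qf_def by blast
    then show ?thesis using qfx[OF that] by simp
  qed
  have qv: "quadvec N r v M = (\<Sum>j\<in>I. \<Sum>k\<in>I. t j k)"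
    unfolding quadvec_nested t_def I_def R_def ..
  have sn: "(\<Sum>j\<in>I. n j) = real N"
    using nsum by (simp add: n_def I_def R_def power2_eq_square)
  have cI: "card I = N" by (simp add: I_def)
  have "(\<Sum>j\<in>I. \<Sum>k\<in>I. n j - t j k - t k j + n k) =
        (\<Sum>j\<in>I. \<Sum>k\<in>I. n j) - (\<Sum>j\<in>I. \<Sum>k\<in>I. t j k) - (\<Sum>j\<in>I. \<Sum>k\<in>I. t k j) + (\<Sum>j\<in>I. \<Sum>k\<in>I. n k)"
    by (simp add: sum.distrib sum_subtractf)
  also have "(\<Sum>j\<in>I. \<Sum>k\<in>I. t k j) = (\<Sum>j\<in>I. \<Sum>k\<in>I. t j k)" by (rule sum.swap)
  also have "(\<Sum>j\<in>I. \<Sum>k\<in>I. n j) = real N * real N" using sn cI by (simp add: sum_distrib_left[symmetric] mult.commute)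
  also have "(\<Sum>j\<in>I. \<Sum>k\<in>I. n k) = real N * real N" using sn cI by simp
  finally have "(\<Sum>j\<in>I. \<Sum>k\<in>I. n j - t j k - t k j + n k) = 0"
    using Q qv by (simp add: power2_eq_square)
  then have z: "n j - t j k - t k j + n k = 0" if "j \<in> I" "k \<in> I" for j k
    using le that fI by (simp add: sum_nonneg_eq_0_iff sum_nonneg)
  show A: "(\<Sum>b\<in>{1..r}. M (j,a) (k,b) * v k b) = v j a" if "j \<in> {1..N}" "k \<in> {1..N}" "a \<in> {1..r}" for j k a
  proof -
    have jk: "j \<in> I" "k \<in> I" "a \<in> R" using that by (auto simp: I_def R_def)
    have "(\<Sum>q\<in>I\<times>R. M (j,a) q * x j k q) = 0"
      by (rule psd_kernel[OF BF(1)]) (use fI fR jk qfx z in auto)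
    then have "(\<Sum>b\<in>R. M (j,a) (j,b) * v j b) - (\<Sum>b\<in>R. M (j,a) (k,b) * v k b) = 0"
      unfolding x_def using row_bv_diff[OF fI jk(1,2), where M=M and p="(j,a)" and u="v j" and w="v k" and R=R] by simp
    moreover have "(\<Sum>b\<in>R. M (j,a) (j,b) * v j b) = v j a"
      using jk fR by (simp add: BF(3) delta1)
    ultimately show ?thesis by (simp add: R_def)
  qed
  have nt: "n j = n k" if "j \<in> I" "k \<in> I" for j k
  proof -
    have "n j = (\<Sum>a\<in>R. v j a * (\<Sum>b\<in>R. M (j,a) (k,b) * v k b))"
      unfolding n_def using A that by (auto simp: I_def R_def intro!: sum.cong)
    also have "\<dots> = (\<Sum>b\<in>R. v k b * (\<Sum>a\<in>R. M (k,b) (j,a) * v j a))"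
      apply (simp add: sum_distrib_left)
      apply (subst sum.swap)
      using that BF(2) by (auto intro!: sum.cong simp: mult_ac)
    also have "\<dots> = n k"
      unfolding n_def using A that by (auto simp: I_def R_def intro!: sum.cong)
    finally show ?thesis .
  qed
  show "(\<Sum>a\<in>{1..r}. v j a * v j a) = 1" if "j \<in> {1..N}" for j
  proof -
    have jI: "j \<in> I" using that by (simp add: I_def)
    have "(\<Sum>k\<in>I. n k) = (\<Sum>k\<in>I. n j)" using nt[OF _ jI] by (intro sum.cong) auto
    then have "real N * n j = real N" using sn cI by simp
    moreover have "N \<noteq> 0" using that by auto
    ultimately have "n j = 1" by simp
    then show ?thesis by (simp add: n_def R_def)
  qed
qed


lemma swap4:
  "(\<Sum>p\<in>T. \<Sum>q\<in>T. \<Sum>s\<in>S. \<Sum>s'\<in>S. f p q s s') = (\<Sum>s\<in>S. \<Sum>s'\<in>S. \<Sum>p\<in>T. \<Sum>q\<in>T. f p q s s')"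
proof -
  have "(\<Sum>p\<in>T. \<Sum>q\<in>T. \<Sum>s\<in>S. \<Sum>s'\<in>S. f p q s s') = (\<Sum>p\<in>T. \<Sum>s\<in>S. \<Sum>q\<in>T. \<Sum>s'\<in>S. f p q s s')"
    by (rule sum.cong[OF refl], rule sum.swap)
  also have "\<dots> = (\<Sum>s\<in>S. \<Sum>p\<in>T. \<Sum>q\<in>T. \<Sum>s'\<in>S. f p q s s')" by (rule sum.swap)
  also have "\<dots> = (\<Sum>s\<in>S. \<Sum>p\<in>T. \<Sum>s'\<in>S. \<Sum>q\<in>T. f p q s s')"
    by (rule sum.cong[OF refl], rule sum.cong[OF refl], rule sum.swap)
  also have "\<dots> = (\<Sum>s\<in>S. \<Sum>s'\<in>S. \<Sum>p\<in>T. \<Sum>q\<in>T. f p q s s')"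
    by (rule sum.cong[OF refl], rule sum.swap)
  finally show ?thesis .
qed

lemma triple_prod:
  "(\<Sum>p\<in>T. a p) * (m::real) * (\<Sum>q\<in>T. b q) = (\<Sum>p\<in>T. \<Sum>q\<in>T. a p * m * b q)"
proof -
  have "(\<Sum>p\<in>T. a p) * m * (\<Sum>q\<in>T. b q) = (\<Sum>p\<in>T. a p * m * (\<Sum>q\<in>T. b q))"
    by (simp add: sum_distrib_right)
  also have "\<dots> = (\<Sum>p\<in>T. \<Sum>q\<in>T. a p * m * b q)"
    by (simp add: sum_distrib_left)
  finally show ?thesis .
qed

lemma psd_congr:
  assumes psd: "psd_on S M" and A: "\<And>p q. p \<in> T \<Longrightarrow> q \<in> T \<Longrightarrow> A p q = (\<Sum>s\<in>S. \<Sum>s'\<in>S. G p s * M s s' * G q s')"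
  shows "psd_on T A"
proof -
  have symM: "\<And>s s'. s \<in> S \<Longrightarrow> s' \<in> S \<Longrightarrow> M s s' = M s' s" using psd by (auto simp: psd_on_def)
  have sym: "A p q = A q p" if "p \<in> T" "q \<in> T" for p q
  proof -
    have "A p q = (\<Sum>s\<in>S. \<Sum>s'\<in>S. G p s * M s s' * G q s')" using A that by simp
    also have "\<dots> = (\<Sum>s'\<in>S. \<Sum>s\<in>S. G p s * M s s' * G q s')" by (rule sum.swap)
    also have "\<dots> = (\<Sum>s'\<in>S. \<Sum>s\<in>S. G q s' * M s' s * G p s)"
      by (auto intro!: sum.cong simp: symM mult_ac)
    also have "\<dots> = A q p" using A that by simp
    finally show ?thesis .
  qed
  have nn: "0 \<le> (\<Sum>p\<in>T. \<Sum>q\<in>T. x p * A p q * x q)" for x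
  proof -
    define y where "y s = (\<Sum>p\<in>T. x p * G p s)" for s
    have "(\<Sum>p\<in>T. \<Sum>q\<in>T. x p * A p q * x q) = (\<Sum>p\<in>T. \<Sum>q\<in>T. \<Sum>s\<in>S. \<Sum>s'\<in>S. (x p * G p s) * M s s' * (x q * G q s'))"
      using A by (auto intro!: sum.cong simp: sum_distrib_left sum_distrib_right mult_ac)
    also have "\<dots> = (\<Sum>s\<in>S. \<Sum>s'\<in>S. \<Sum>p\<in>T. \<Sum>q\<in>T. (x p * G p s) * M s s' * (x q * G q s'))"
      by (rule swap4)
    also have "\<dots> = (\<Sum>s\<in>S. \<Sum>s'\<in>S. y s * M s s' * y s')"
      unfolding y_def triple_prod ..
    finally show ?thesis using psd unfolding psd_on_def by simp
  qed
  show ?thesis unfolding psd_on_def using sym nn by blast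
qed

lemma partb_B:
  assumes nsum: "(\<Sum>i\<in>{1..N}. \<Sum>a\<in>{1..r}. (v i a)\<^sup>2) = real N" and MB: "M \<in> Bset N r"
    and Q: "quadvec N r v M = (real N)\<^sup>2"
  shows "\<And>i j k a. i \<in> {1..N} \<Longrightarrow> j \<in> {1..N} \<Longrightarrow> k \<in> {1..N} \<Longrightarrow> a \<in> {1..r} \<Longrightarrow>
     (\<Sum>b\<in>{1..r}. M (k,a) (j,b) * v i b) = (\<Sum>b\<in>{1..r}. M (k,a) (i,b) * v j b)"
proof -
  define I where "I = {1..N}"
  define R where "R = {1..r}"
  have fI: "finite I" and fR: "finite R" by (auto simp: I_def R_def)
  note BF = Bset_facts[OF MB, folded I_def R_def]
  note A = partb_A[OF assms, folded I_def R_def]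
  have c: "(\<Sum>a\<in>R. \<Sum>b\<in>R. v i a * M (j,a) (i,b) * v j b) = 1" if "i \<in> I" "j \<in> I" for i j
  proof -
    have "(\<Sum>a\<in>R. \<Sum>b\<in>R. v i a * M (j,a) (i,b) * v j b) = (\<Sum>a\<in>R. \<Sum>b\<in>R. v j b * (M (j,b) (i,a) * v i a))"
      using that by (auto intro!: sum.cong simp: BF(4) mult_ac)
    also have "\<dots> = (\<Sum>b\<in>R. v j b * (\<Sum>a\<in>R. M (j,b) (i,a) * v i a))"
      by (subst sum.swap) (simp add: sum_distrib_left)
    also have "\<dots> = (\<Sum>b\<in>R. v j b * v j b)" using that A(1) by (auto intro!: sum.cong)
    also have "\<dots> = 1" using A(2) that by simp
    finally show ?thesis .
  qed
  have n1: "(\<Sum>a\<in>R. \<Sum>b\<in>R. u a * M (j,a) (j,b) * u b) = (\<Sum>a\<in>R. u a * u a)" if "j \<in> I" for j u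
    using that fR by (simp add: BF(3) delta2)
  fix i j k a assume h: "i \<in> {1..N}" "j \<in> {1..N}" "k \<in> {1..N}" "a \<in> {1..r}"
  then have hI: "i \<in> I" "j \<in> I" "k \<in> I" "a \<in> R" by (auto simp: I_def R_def)
  define x where "x = (\<lambda>p. bv j (v i) p - bv i (v j) p)"
  have "qf (I\<times>R) M x x = 0"
    unfolding x_def qf_diff using hI fI by (simp add: qf_bv n1 c A(2))
  then have "(\<Sum>q\<in>I\<times>R. M (k,a) q * x q) = 0"
    using psd_kernel[OF BF(1)] fI fR hI by blast
  then show "(\<Sum>b\<in>{1..r}. M (k,a) (j,b) * v i b) = (\<Sum>b\<in>{1..r}. M (k,a) (i,b) * v j b)"
    unfolding x_def using row_bv_diff[OF fI hI(2,1), where M=M and p="(k,a)" and u="v i" and w="v j" and R=R]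
    by (simp add: R_def)
qed



lemma partb:
  assumes nsum: "(\<Sum>i\<in>{1..N}. \<Sum>a\<in>{1..r}. (v i a)\<^sup>2) = real N" and MB: "M \<in> Bset N r"
    and Q: "quadvec N r v M = (real N)\<^sup>2"
  shows "pseudomoment4 N (\<lambda>(i,j) (k,l). blockform r v M i j k l) \<and>
       extends4 N (\<lambda>(i,j) (k,l). blockform r v M i j k l) (gram r v)"
proof -
  define I where "I = {1..N}"
  define R where "R = {1..r}"
  have fI: "finite I" and fR: "finite R" by (auto simp: I_def R_def)
  note BF = Bset_facts[OF MB, folded I_def R_def]
  note A = partb_A[OF assms, folded I_def R_def]
  note B = partb_B[OF assms, folded I_def R_def]
  define F where "F i j k l = blockform r v M i j k l" for i j k l
  have Fd: "F i j k l = (\<Sum>a\<in>R. \<Sum>b\<in>R. v i a * M (j,a) (k,b) * v l b)" for i j k l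
    by (simp add: F_def blockform_def R_def)
  have rev: "F l k j i = F i j k l" if "i \<in> I" "j \<in> I" "k \<in> I" "l \<in> I" for i j k l
  proof -
    have "F l k j i = (\<Sum>b\<in>R. \<Sum>a\<in>R. v l a * M (k,a) (j,b) * v i b)" unfolding Fd by (rule sum.swap)
    also have "\<dots> = F i j k l" unfolding Fd using that by (auto intro!: sum.cong simp: BF(2) mult_ac)
    finally show ?thesis .
  qed
  have s12: "F i k j l = F i j k l" if "i \<in> I" "j \<in> I" "k \<in> I" "l \<in> I" for i j k l
    unfolding Fd using that by (auto intro!: sum.cong simp: BF(2) BF(4))
  have s23: "F i j l k = F i j k l" if "i \<in> I" "j \<in> I" "k \<in> I" "l \<in> I" for i j k l
  proof -
    have "F i j l k = (\<Sum>a\<in>R. v i a * (\<Sum>b\<in>R. M (j,a) (l,b) * v k b))"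
      unfolding Fd by (simp add: sum_distrib_left mult.assoc)
    also have "\<dots> = (\<Sum>a\<in>R. v i a * (\<Sum>b\<in>R. M (j,a) (k,b) * v l b))"
      using that B[of k l j] by (auto intro!: sum.cong simp: R_def I_def)
    also have "\<dots> = F i j k l" unfolding Fd by (simp add: sum_distrib_left mult.assoc)
    finally show ?thesis .
  qed
  have s01: "F j i k l = F i j k l" if "i \<in> I" "j \<in> I" "k \<in> I" "l \<in> I" for i j k l
  proof -
    have "F j i k l = F l k i j" using rev[of j i k l] that by simp
    also have "\<dots> = F l k j i" using s23[of l k j i] that by simp
    also have "\<dots> = F i j k l" using rev[of i j k l] that by simp
    finally show ?thesis .
  qed
  have Fg: "F i k k j = gram r v i j" if "i \<in> I" "j \<in> I" "k \<in> I" for i j k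
    using that fR unfolding Fd gram_def R_def[symmetric] by (simp add: BF(3) delta2)
  have Fkk: "F i j k k = gram r v i j" if "i \<in> I" "j \<in> I" "k \<in> I" for i j k
  proof -
    have "F i j k k = F i k j k" using s12[of i j k k] that by simp
    also have "\<dots> = F i k k j" using s23[of i k k j] that by simp
    finally show ?thesis using Fg that by simp
  qed
  define Y where "Y = (\<lambda>(i,j) (k,l). blockform r v M i j k l)"
  have Yp: "Y (i,j) (k,l) = F i j k l" for i j k l by (simp add: Y_def F_def)
  have psdY: "psd_on (I\<times>I) Y"
  proof (rule psd_congr[OF BF(1), where G="\<lambda>p. bv (snd p) (v (fst p))"])
    fix p q assume pq: "p \<in> I\<times>I" "q \<in> I\<times>I"
    obtain i j where p: "p = (i,j)" by (cases p)
    obtain k l where q: "q = (k,l)" by (cases q)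
    have h: "i \<in> I" "j \<in> I" "k \<in> I" "l \<in> I" using pq p q by auto
    have "(\<Sum>s\<in>I\<times>R. \<Sum>s'\<in>I\<times>R. bv j (v i) s * M s s' * bv l (v k) s') =
          (\<Sum>s\<in>I\<times>R. bv j (v i) s * (\<Sum>s'\<in>I\<times>R. M s s' * bv l (v k) s'))"
      by (simp add: sum_distrib_left mult.assoc)
    also have "\<dots> = (\<Sum>s\<in>I\<times>R. bv j (v i) s * (\<Sum>b\<in>R. M s (l,b) * v k b))"
      using fI h by (simp add: sum_bv_right)
    also have "\<dots> = (\<Sum>a\<in>R. v i a * (\<Sum>b\<in>R. M (j,a) (l,b) * v k b))"
      using fI h by (simp add: sum_bv_left)
    also have "\<dots> = F i j l k" unfolding Fd by (simp add: sum_distrib_left mult.assoc)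
    also have "\<dots> = F i j k l" using s23 h by simp
    finally show "Y p q = (\<Sum>s\<in>I\<times>R. \<Sum>s'\<in>I\<times>R. bv (snd p) (v (fst p)) s * M s s' * bv (snd q) (v (fst q)) s')"
      using p q Yp by simp
  qed
  have perm: "\<forall>i\<in>I. \<forall>j\<in>I. \<forall>k\<in>I. \<forall>l\<in>I.
     F ([i,j,k,l] ! p 0) ([i,j,k,l] ! p 1) ([i,j,k,l] ! p 2) ([i,j,k,l] ! p 3) = F i j k l"
    if "p permutes {..<4::nat}" for p
    by (rule perm4_closure[OF s01 s12 s23 that])
  have "pseudomoment4 N Y"
    unfolding pseudomoment4_def Let_def I_def[symmetric]
  proof (intro conjI)
    show "psd_on (I\<times>I) Y" by (rule psdY)
    show "\<forall>i\<in>I. \<forall>j\<in>I. \<forall>k\<in>I. \<forall>k'\<in>I. Y (i, j) (k, k) = Y (i, j) (k', k')"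
      using Fkk by (simp add: Yp)
    show "\<forall>i\<in>I. Y (i, i) (i, i) = 1"
      using Fkk A(2) by (simp add: Yp gram_def R_def)
    show "\<forall>i\<in>I. \<forall>j\<in>I. \<forall>k\<in>I. \<forall>l\<in>I. \<forall>p. p permutes {..<4} \<longrightarrow>
        Y ([i, j, k, l] ! p 0, [i, j, k, l] ! p 1) ([i, j, k, l] ! p 2, [i, j, k, l] ! p 3) = Y (i, j) (k, l)"
      using perm by (simp add: Yp)
  qed
  moreover have "extends4 N Y (gram r v)"
    unfolding extends4_def I_def[symmetric]
  proof (intro ballI)
    fix i j assume h: "i \<in> I" "j \<in> I"
    then have one: "1 \<in> I" by (auto simp: I_def)
    have "Y (1,i) (1,j) = F 1 i 1 j" by (simp add: Yp)
    also have "\<dots> = F i 1 1 j" using s01[of i 1 1 j] h one by simp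
    also have "\<dots> = gram r v i j" using Fg h one by simp
    finally show "Y (1,i) (1,j) = gram r v i j" .
  qed
  ultimately show ?thesis by (simp add: Y_def)
qed



definition Pm :: "(nat \<Rightarrow> nat \<Rightarrow> real) \<Rightarrow> (nat \<Rightarrow> nat \<Rightarrow> real) \<Rightarrow> nat set \<Rightarrow> nat \<Rightarrow> nat \<Rightarrow> real" where
  "Pm v L I a b = (\<Sum>i\<in>I. v i a * L i b)"

lemma Pm_idem:
  assumes fR: "finite R" and Pv: "\<forall>i\<in>I. \<forall>a\<in>R. (\<Sum>b\<in>R. Pm v L I a b * v i b) = v i a" and a: "a \<in> R"
  shows "(\<Sum>b\<in>R. Pm v L I a b * Pm v L I b d) = Pm v L I a d"
proof -
  have "(\<Sum>b\<in>R. Pm v L I a b * Pm v L I b d) = (\<Sum>b\<in>R. \<Sum>i\<in>I. Pm v L I a b * v i b * L i d)"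
    unfolding Pm_def by (simp add: sum_distrib_left mult.assoc)
  also have "\<dots> = (\<Sum>i\<in>I. \<Sum>b\<in>R. Pm v L I a b * v i b * L i d)" by (rule sum.swap)
  also have "\<dots> = (\<Sum>i\<in>I. (\<Sum>b\<in>R. Pm v L I a b * v i b) * L i d)" by (simp add: sum_distrib_right)
  also have "\<dots> = (\<Sum>i\<in>I. v i a * L i d)" using Pv a by (intro sum.cong refl) simp
  finally show ?thesis by (simp add: Pm_def)
qed

lemma sum_split_lin: "(\<Sum>i\<in>I. f i * (g i + h i * k)) = (\<Sum>i\<in>I. f i * g i) + (\<Sum>i\<in>I. f i * h i) * (k::real)"
  by (simp add: distrib_left sum.distrib sum_distrib_right mult.assoc)

lemma gs_exists:
  assumes fR: "finite R"
  shows "\<exists>L. (\<forall>a b. Pm v L {1..n} a b = Pm v L {1..n} b a) \<and>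
             (\<forall>i\<in>{1..n}. \<forall>a\<in>R. (\<Sum>b\<in>R. Pm v L {1..n} a b * v i b) = v i a)"
proof (induction n)
  case 0
  show ?case by (rule exI[of _ "\<lambda>i b. 0"]) (simp add: Pm_def)
next
  case (Suc n)
  then obtain L where Ls: "\<And>a b. Pm v L {1..n} a b = Pm v L {1..n} b a"
    and Lv: "\<forall>i\<in>{1..n}. \<forall>a\<in>R. (\<Sum>b\<in>R. Pm v L {1..n} a b * v i b) = v i a" by blast
  define P where "P = Pm v L {1..n}"
  define u where "u = v (Suc n)"
  define w where "w a = u a - (\<Sum>b\<in>R. P a b * u b)" for a
  define s where "s = (\<Sum>a\<in>R. w a * w a)"
  define c where "c i = (if i = Suc n then 1 else - (\<Sum>b\<in>R. L i b * u b))" for i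
  define si where "si = inverse s"
  define L' where "L' i b = (if i = Suc n then 0 else L i b) + c i * (w b * si)" for i b
  have ins: "{1..Suc n} = insert (Suc n) {1..n}" by auto
  have nin: "Suc n \<notin> {1..n}" by simp
  have Psym: "\<And>a b. P a b = P b a" using Ls by (simp add: P_def)
  have Pv: "\<And>i a. i \<in> {1..n} \<Longrightarrow> a \<in> R \<Longrightarrow> (\<Sum>b\<in>R. P a b * v i b) = v i a" using Lv by (simp add: P_def)
  have Pidem: "\<And>a d. a \<in> R \<Longrightarrow> (\<Sum>b\<in>R. P a b * P b d) = P a d"
    unfolding P_def using Pm_idem[OF fR Lv] by blast
  have Vc: "(\<Sum>i\<in>{1..Suc n}. v i a * c i) = w a" for a
  proof -
    have "(\<Sum>i\<in>{1..Suc n}. v i a * c i) = u a + (\<Sum>i\<in>{1..n}. v i a * c i)"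
      unfolding ins using nin by (simp add: c_def u_def)
    also have "(\<Sum>i\<in>{1..n}. v i a * c i) = - (\<Sum>i\<in>{1..n}. \<Sum>b\<in>R. v i a * L i b * u b)"
      by (simp add: c_def sum_negf sum_distrib_left mult.assoc)
    also have "(\<Sum>i\<in>{1..n}. \<Sum>b\<in>R. v i a * L i b * u b) = (\<Sum>b\<in>R. P a b * u b)"
      unfolding P_def Pm_def by (subst sum.swap) (simp add: sum_distrib_right)
    finally show ?thesis by (simp add: w_def)
  qed
  have P': "Pm v L' {1..Suc n} a b = P a b + w a * (w b * si)" for a b
  proof -
    have "Pm v L' {1..Suc n} a b = (\<Sum>i\<in>{1..Suc n}. v i a * (if i = Suc n then 0 else L i b)) + (\<Sum>i\<in>{1..Suc n}. v i a * c i) * (w b * si)"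
      unfolding Pm_def L'_def by (rule sum_split_lin)
    also have "(\<Sum>i\<in>{1..Suc n}. v i a * (if i = Suc n then 0 else L i b)) = P a b"
    proof -
      have "(\<Sum>i\<in>{1..Suc n}. v i a * (if i = Suc n then 0 else L i b)) =
            v (Suc n) a * 0 + (\<Sum>i\<in>{1..n}. v i a * (if i = Suc n then 0 else L i b))"
        unfolding ins by (subst sum.insert) auto
      also have "(\<Sum>i\<in>{1..n}. v i a * (if i = Suc n then 0 else L i b)) = (\<Sum>i\<in>{1..n}. v i a * L i b)"
        by (rule sum.cong) auto
      finally show ?thesis by (simp add: P_def Pm_def)
    qed
    finally show ?thesis using Vc by simp
  qed
  have wv: "(\<Sum>b\<in>R. w b * v i b) = 0" if "i \<in> {1..n}" for i
  proof -
    have "(\<Sum>b\<in>R. w b * v i b) = (\<Sum>b\<in>R. u b * v i b) - (\<Sum>b\<in>R. \<Sum>d\<in>R. P b d * u d * v i b)"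
      unfolding w_def by (simp add: left_diff_distrib sum_subtractf sum_distrib_right)
    also have "(\<Sum>b\<in>R. \<Sum>d\<in>R. P b d * u d * v i b) = (\<Sum>d\<in>R. u d * (\<Sum>b\<in>R. P d b * v i b))"
      by (subst sum.swap) (simp add: sum_distrib_left Psym mult_ac)
    also have "\<dots> = (\<Sum>d\<in>R. u d * v i d)" using Pv that by (intro sum.cong refl) simp
    finally show ?thesis by (simp add: mult.commute)
  qed
  have Pw: "(\<Sum>b\<in>R. P a b * w b) = 0" if "a \<in> R" for a
  proof -
    have "(\<Sum>b\<in>R. P a b * w b) = (\<Sum>b\<in>R. P a b * u b) - (\<Sum>b\<in>R. \<Sum>d\<in>R. P a b * P b d * u d)"
      unfolding w_def by (simp add: right_diff_distrib sum_subtractf sum_distrib_left mult.assoc)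
    also have "(\<Sum>b\<in>R. \<Sum>d\<in>R. P a b * P b d * u d) = (\<Sum>d\<in>R. (\<Sum>b\<in>R. P a b * P b d) * u d)"
      by (subst sum.swap) (simp add: sum_distrib_right)
    also have "\<dots> = (\<Sum>d\<in>R. P a d * u d)" using Pidem that by simp
    finally show ?thesis by simp
  qed
  have wu: "(\<Sum>b\<in>R. w b * u b) = s"
  proof -
    have "(\<Sum>b\<in>R. w b * u b) = (\<Sum>b\<in>R. w b * w b) + (\<Sum>b\<in>R. w b * (\<Sum>d\<in>R. P b d * u d))"
      unfolding sum.distrib[symmetric] by (rule sum.cong[OF refl]) (simp add: w_def algebra_simps)
    also have "(\<Sum>b\<in>R. w b * (\<Sum>d\<in>R. P b d * u d)) = (\<Sum>d\<in>R. u d * (\<Sum>b\<in>R. P d b * w b))"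
      by (simp add: sum_distrib_left sum_distrib_right, subst sum.swap) (simp add: Psym mult_ac)
    also have "\<dots> = 0" using Pw by simp
    finally show ?thesis by (simp add: s_def)
  qed
  show ?case
  proof (rule exI[of _ L'], intro conjI ballI allI)
    fix a b show "Pm v L' {1..Suc n} a b = Pm v L' {1..Suc n} b a" unfolding P' by (simp add: Psym mult.commute)
  next
    fix i a assume i: "i \<in> {1..Suc n}" and a: "a \<in> R"
    have "(\<Sum>b\<in>R. Pm v L' {1..Suc n} a b * v i b) = (\<Sum>b\<in>R. P a b * v i b) + w a * si * (\<Sum>b\<in>R. w b * v i b)"
    proof -
      have "(\<Sum>b\<in>R. Pm v L' {1..Suc n} a b * v i b) = (\<Sum>b\<in>R. P a b * v i b + w a * si * (w b * v i b))"
        unfolding P' by (rule sum.cong) (simp_all add: algebra_simps)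
      also have "\<dots> = (\<Sum>b\<in>R. P a b * v i b) + w a * si * (\<Sum>b\<in>R. w b * v i b)"
        by (simp add: sum.distrib sum_distrib_left)
      finally show ?thesis .
    qed
    also have "\<dots> = v i a"
    proof (cases "i = Suc n")
      case True
      have "(\<Sum>b\<in>R. P a b * u b) = u a - w a" by (simp add: w_def)
      moreover have "s = 0 \<Longrightarrow> w a = 0"
      proof -
        assume "s = 0"
        then have "\<forall>b\<in>R. w b * w b = 0" unfolding s_def using fR by (simp add: sum_nonneg_eq_0_iff)
        then show "w a = 0" using a by simp
      qed
      ultimately show ?thesis using True wu by (cases "s = 0") (auto simp: u_def si_def)
    next
      case False
      then have "i \<in> {1..n}" using i by auto
      then show ?thesis using Pv a wv by simp
    qed
    finally show "(\<Sum>b\<in>R. Pm v L' {1..Suc n} a b * v i b) = v i a" .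
  qed
qed



lemma Yperm:
  assumes "pseudomoment4 N Y" "p permutes {..<4::nat}" "i \<in> {1..N}" "j \<in> {1..N}" "k \<in> {1..N}" "l \<in> {1..N}"
  shows "Y ([i,j,k,l] ! p 0, [i,j,k,l] ! p 1) ([i,j,k,l] ! p 2, [i,j,k,l] ! p 3) = Y (i,j) (k,l)"
  using assms unfolding pseudomoment4_def Let_def by blast

lemma Ysyms:
  assumes Y: "pseudomoment4 N Y" and h: "i \<in> {1..N}" "j \<in> {1..N}" "k \<in> {1..N}" "l \<in> {1..N}"
  shows "Y (j,i) (k,l) = Y (i,j) (k,l)" and "Y (i,k) (j,l) = Y (i,j) (k,l)" and "Y (i,j) (l,k) = Y (i,j) (k,l)"
proof -
  have t01: "Transposition.transpose (0::nat) 1 permutes {..<4}" by (rule permutes_swap_id) auto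
  have t12: "Transposition.transpose (1::nat) 2 permutes {..<4}" by (rule permutes_swap_id) auto
  have t23: "Transposition.transpose (2::nat) 3 permutes {..<4}" by (rule permutes_swap_id) auto
  have e01: "Transposition.transpose (0::nat) 1 0 = 1" "Transposition.transpose (0::nat) 1 1 = 0"
     "Transposition.transpose (0::nat) 1 2 = 2" "Transposition.transpose (0::nat) 1 3 = 3"
    by (simp_all add: Transposition.transpose_def)
  have e12: "Transposition.transpose (1::nat) 2 0 = 0" "Transposition.transpose (1::nat) 2 1 = 2"
     "Transposition.transpose (1::nat) 2 2 = 1" "Transposition.transpose (1::nat) 2 3 = 3"
    by (simp_all add: Transposition.transpose_def)
  have e23: "Transposition.transpose (2::nat) 3 0 = 0" "Transposition.transpose (2::nat) 3 1 = 1"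
     "Transposition.transpose (2::nat) 3 2 = 3" "Transposition.transpose (2::nat) 3 3 = 2"
    by (simp_all add: Transposition.transpose_def)
  show "Y (j,i) (k,l) = Y (i,j) (k,l)" using Yperm[OF Y t01 h] unfolding e01 by simp
  show "Y (i,k) (j,l) = Y (i,j) (k,l)" using Yperm[OF Y t12 h] unfolding e12 by simp
  show "Y (i,j) (l,k) = Y (i,j) (k,l)" using Yperm[OF Y t23 h] unfolding e23 by simp
qed

lemma psd_add:
  assumes "psd_on S A" "psd_on S B"
  shows "psd_on S (\<lambda>p q. A p q + B p q)"
proof -
  have "(\<Sum>i\<in>S. \<Sum>j\<in>S. x i * (A i j + B i j) * x j) =
        (\<Sum>i\<in>S. \<Sum>j\<in>S. x i * A i j * x j) + (\<Sum>i\<in>S. \<Sum>j\<in>S. x i * B i j * x j)" for x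
    by (simp add: distrib_left distrib_right sum.distrib)
  note e = this
  have sA: "\<forall>i\<in>S. \<forall>j\<in>S. A i j = A j i" and nA: "\<And>x. 0 \<le> (\<Sum>i\<in>S. \<Sum>j\<in>S. x i * A i j * x j)"
    using assms(1) unfolding psd_on_def by blast+
  have sB: "\<forall>i\<in>S. \<forall>j\<in>S. B i j = B j i" and nB: "\<And>x. 0 \<le> (\<Sum>i\<in>S. \<Sum>j\<in>S. x i * B i j * x j)"
    using assms(2) unfolding psd_on_def by blast+
  show ?thesis unfolding psd_on_def
  proof (intro conjI allI ballI)
    fix i j assume "i \<in> S" "j \<in> S" then show "A i j + B i j = A j i + B j i" using sA sB by simp
  next
    fix x show "0 \<le> (\<Sum>i\<in>S. \<Sum>j\<in>S. x i * (A i j + B i j) * x j)" unfolding e using nA nB by (rule add_nonneg_nonneg)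
  qed
qed

lemma sum_sel2_left:
  assumes "finite I" "j \<in> I"
  shows "(\<Sum>s\<in>I\<times>I. (if snd s = j then c (fst s) else 0) * f s) = (\<Sum>p\<in>I. c p * (f (p,j) :: real))"
proof -
  have "(\<Sum>s\<in>I\<times>I. (if snd s = j then c (fst s) else 0) * f s) =
        (\<Sum>p\<in>I. \<Sum>q\<in>I. (if q = j then c p * f (p,q) else 0))"
    unfolding sum_prod by (intro sum.cong refl) auto
  also have "\<dots> = (\<Sum>p\<in>I. c p * f (p,j))" using assms by simp
  finally show ?thesis .
qed

lemma sum_sel2_right:
  assumes "finite I" "j \<in> I"
  shows "(\<Sum>s\<in>I\<times>I. f s * (if snd s = j then c (fst s) else 0)) = (\<Sum>p\<in>I. f (p,j) * (c p :: real))"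
  using sum_sel2_left[OF assms, of c f] by (simp add: mult.commute)


lemma parta:
  assumes Y: "pseudomoment4 N Y" and ext: "extends4 N Y (gram r v)"
  shows "\<exists>M\<in>Bset N r. quadvec N r v M = (real N)\<^sup>2 \<and>
          (\<forall>i\<in>{1..N}. \<forall>j\<in>{1..N}. \<forall>k\<in>{1..N}. \<forall>l\<in>{1..N}.
             Y (i,j) (k,l) = blockform r v M i j k l)"
proof -
  define I where "I = {1..N}"
  define R where "R = {1..r}"
  have fI: "finite I" and fR: "finite R" by (auto simp: I_def R_def)
  have Ypsd: "psd_on (I\<times>I) Y" using Y unfolding pseudomoment4_def I_def by blast
  have Ysym: "\<And>s s'. s \<in> I\<times>I \<Longrightarrow> s' \<in> I\<times>I \<Longrightarrow> Y s s' = Y s' s" using Ypsd by (auto simp: psd_on_def)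
  have c2: "\<And>i j k k'. i \<in> I \<Longrightarrow> j \<in> I \<Longrightarrow> k \<in> I \<Longrightarrow> k' \<in> I \<Longrightarrow> Y (i,j) (k,k) = Y (i,j) (k',k')"
    using Y unfolding pseudomoment4_def I_def by blast
  have d1: "\<And>i. i \<in> I \<Longrightarrow> Y (i,i) (i,i) = 1" using Y unfolding pseudomoment4_def I_def by blast
  have ex: "\<And>i j. i \<in> I \<Longrightarrow> j \<in> I \<Longrightarrow> Y (1,i) (1,j) = gram r v i j" using ext unfolding extends4_def I_def by blast
  note YS = Ysyms[OF Y, folded I_def]
  have s01: "Y (j,i) (k,l) = Y (i,j) (k,l)" and s12: "Y (i,k) (j,l) = Y (i,j) (k,l)" and s23: "Y (i,j) (l,k) = Y (i,j) (k,l)"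
    if "i \<in> I" "j \<in> I" "k \<in> I" "l \<in> I" for i j k l using YS[OF that] by auto
  have s13: "Y (i,l) (k,j) = Y (i,j) (k,l)" if h: "i \<in> I" "j \<in> I" "k \<in> I" "l \<in> I" for i j k l
  proof -
    have "Y (i,l) (k,j) = Y (i,k) (l,j)" using s12[of i k l j] h by simp
    also have "\<dots> = Y (i,k) (j,l)" using s23[of i k l j] h by simp
    also have "\<dots> = Y (i,j) (k,l)" using s12[of i j k l] h by simp
    finally show ?thesis .
  qed
  have s02: "Y (k,j) (i,l) = Y (i,j) (k,l)" if h: "i \<in> I" "j \<in> I" "k \<in> I" "l \<in> I" for i j k l
  proof -
    have "Y (k,j) (i,l) = Y (j,k) (i,l)" using s01[of j k i l] h by simp
    also have "\<dots> = Y (j,i) (k,l)" using s12[of j i k l] h by simp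
    also have "\<dots> = Y (i,j) (k,l)" using s01[of i j k l] h by simp
    finally show ?thesis .
  qed
  have gY: "Y (i,j) (l,j) = gram r v i l" if h: "i \<in> I" "j \<in> I" "l \<in> I" for i j l
  proof -
    have one: "1 \<in> I" using h by (auto simp: I_def)
    have "Y (i,j) (l,j) = Y (i,j) (j,l)" using s23[of i j j l] h by simp
    also have "\<dots> = Y (i,l) (j,j)" using s13[of i l j j] h by simp
    also have "\<dots> = Y (i,l) (1,1)" using c2[of i l j 1] h one by simp
    also have "\<dots> = Y (i,1) (l,1)" using s12[of i l 1 1] h one by simp
    also have "\<dots> = Y (1,i) (l,1)" using s01[of 1 i l 1] h one by simp
    also have "\<dots> = Y (1,i) (1,l)" using s23[of 1 i 1 l] h one by simp
    also have "\<dots> = gram r v i l" using ex h by simp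
    finally show ?thesis .
  qed
  have gYR: "Y (i,j) (l,j) = (\<Sum>a\<in>R. v i a * v l a)" if h: "i \<in> I" "j \<in> I" "l \<in> I" for i j l
    using gY[OF h] by (simp add: gram_def R_def)
  have Y1: "Y (j,j) (k,k) = 1" if "j \<in> I" "k \<in> I" for j k
    using c2[of j j k j] d1[of j] that by simp
  have kern: "(\<Sum>p\<in>I. c p * Y (p,j) (q,k)) = 0"
    if c: "\<And>b. b \<in> R \<Longrightarrow> (\<Sum>p\<in>I. c p * v p b) = 0" and h: "j \<in> I" "q \<in> I" "k \<in> I" for c j q k
  proof -
    define u where "u s = (if snd s = j then c (fst s) else 0)" for s :: "nat \<times> nat"
    have "qf (I\<times>I) Y u u = (\<Sum>s\<in>I\<times>I. u s * (\<Sum>s'\<in>I\<times>I. Y s s' * u s'))"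
      unfolding qf_def by (simp add: sum_distrib_left mult.assoc)
    also have "\<dots> = (\<Sum>s\<in>I\<times>I. u s * (\<Sum>p'\<in>I. Y s (p',j) * c p'))"
      unfolding u_def using sum_sel2_right[OF fI h(1)] by simp
    also have "\<dots> = (\<Sum>p\<in>I. c p * (\<Sum>p'\<in>I. Y (p,j) (p',j) * c p'))"
      unfolding u_def by (rule sum_sel2_left[OF fI h(1)])
    also have "\<dots> = (\<Sum>p\<in>I. \<Sum>p'\<in>I. \<Sum>b\<in>R. (c p * v p b) * (c p' * v p' b))"
      using gYR h(1) by (auto intro!: sum.cong simp: sum_distrib_left sum_distrib_right mult_ac)
    also have "\<dots> = (\<Sum>b\<in>R. (\<Sum>p\<in>I. c p * v p b) * (\<Sum>p'\<in>I. c p' * v p' b))"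
    proof -
      have "(\<Sum>p\<in>I. \<Sum>p'\<in>I. \<Sum>b\<in>R. (c p * v p b) * (c p' * v p' b)) = (\<Sum>p\<in>I. \<Sum>b\<in>R. \<Sum>p'\<in>I. (c p * v p b) * (c p' * v p' b))"
        by (rule sum.cong[OF refl], rule sum.swap)
      also have "\<dots> = (\<Sum>b\<in>R. \<Sum>p\<in>I. \<Sum>p'\<in>I. (c p * v p b) * (c p' * v p' b))" by (rule sum.swap)
      also have "\<dots> = (\<Sum>b\<in>R. (\<Sum>p\<in>I. c p * v p b) * (\<Sum>p'\<in>I. c p' * v p' b))"
        by (simp add: sum_product)
      finally show ?thesis .
    qed
    also have "\<dots> = 0" using c by simp
    finally have z: "qf (I\<times>I) Y u u = 0" .
    have "(\<Sum>s\<in>I\<times>I. Y (q,k) s * u s) = 0"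
      by (rule psd_kernel[OF Ypsd _ z]) (use fI h in auto)
    then have "(\<Sum>p\<in>I. Y (q,k) (p,j) * c p) = 0"
      unfolding u_def using sum_sel2_right[OF fI h(1)] by simp
    moreover have "\<And>p. p \<in> I \<Longrightarrow> Y (q,k) (p,j) = Y (p,j) (q,k)" using Ysym h by auto
    ultimately show ?thesis by (simp add: mult.commute)
  qed
  obtain L where Ls: "\<And>a b. Pm v L I a b = Pm v L I b a"
    and Lv: "\<forall>i\<in>I. \<forall>a\<in>R. (\<Sum>b\<in>R. Pm v L I a b * v i b) = v i a"
    using gs_exists[OF fR, of v N] unfolding I_def by blast
  define P where "P = Pm v L I"
  have Psym: "\<And>a b. P a b = P b a" using Ls by (simp add: P_def)
  have Pv: "\<And>i a. i \<in> I \<Longrightarrow> a \<in> R \<Longrightarrow> (\<Sum>b\<in>R. P a b * v i b) = v i a" using Lv by (simp add: P_def)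
  have Pidem: "\<And>a d. a \<in> R \<Longrightarrow> (\<Sum>b\<in>R. P a b * P b d) = P a d"
    unfolding P_def using Pm_idem[OF fR Lv] by blast
  define Gl where "Gl = (\<lambda>(p::nat\<times>nat) (s::nat\<times>nat). if snd s = fst p then L (fst s) (snd p) else 0)"
  define M1 where "M1 = (\<lambda>p q. \<Sum>s\<in>I\<times>I. \<Sum>s'\<in>I\<times>I. Gl p s * Y s s' * Gl q s')"
  define E where "E = (\<lambda>e c. (if e = c then 1 else 0) - P e (c::nat))"
  define Id where "Id = (\<lambda>e e'::nat. if e = e' then 1 else (0::real))"
  define M2 where "M2 = (\<lambda>(p::nat\<times>nat) (q::nat\<times>nat). \<Sum>e\<in>R. \<Sum>e'\<in>R. E e (snd p) * Id e e' * E e' (snd q))"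
  define M where "M = (\<lambda>p q. M1 p q + M2 p q)"
  define M1c where "M1c j a k b = (\<Sum>i\<in>I. L i a * (\<Sum>l\<in>I. Y (i,j) (l,k) * L l b))" for j a k b
  have CM1: "M1 (j,a) (k,b) = M1c j a k b" if "j \<in> I" "k \<in> I" for j a k b
  proof -
    have "M1 (j,a) (k,b) = (\<Sum>s\<in>I\<times>I. (if snd s = j then L (fst s) a else 0) *
            (\<Sum>s'\<in>I\<times>I. Y s s' * (if snd s' = k then L (fst s') b else 0)))"
      unfolding M1_def Gl_def fst_conv snd_conv by (simp add: sum_distrib_left mult.assoc)
    also have "\<dots> = (\<Sum>s\<in>I\<times>I. (if snd s = j then L (fst s) a else 0) * (\<Sum>l\<in>I. Y s (l,k) * L l b))"
    proof -
      have inner: "\<And>s. (\<Sum>s'\<in>I\<times>I. Y s s' * (if snd s' = k then L (fst s') b else 0)) = (\<Sum>l\<in>I. Y s (l,k) * L l b)"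
        by (rule sum_sel2_right[OF fI that(2)])
      show ?thesis by (simp only: inner)
    qed
    also have "\<dots> = M1c j a k b" unfolding M1c_def by (rule sum_sel2_left[OF fI that(1)])
    finally show ?thesis .
  qed
  have dl: "(\<Sum>e\<in>R. (if e = a then 1 else 0) * f e) = (f a :: real)" if "a \<in> R" for a f
  proof -
    have "(\<Sum>e\<in>R. (if e = a then 1 else 0) * f e) = (\<Sum>e\<in>R. if e = a then f e else 0)" by (rule sum.cong) auto
    then show ?thesis using that fR by simp
  qed
  have CM2: "M2 (j,a) (k,b) = (if a = b then 1 else 0) - P a b" if "a \<in> R" "b \<in> R" for j a k b
  proof -
    have "M2 (j,a) (k,b) = (\<Sum>e\<in>R. E e a * E e b)" unfolding M2_def Id_def using delta2[OF fR] by simp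
    also have "\<dots> = (\<Sum>e\<in>R. (if e = a then 1 else 0) * (if e = b then 1 else 0)) - (\<Sum>e\<in>R. (if e = a then 1 else 0) * P e b)
          - (\<Sum>e\<in>R. (if e = b then 1 else 0) * P e a) + (\<Sum>e\<in>R. P a e * P e b)"
      unfolding E_def by (simp add: algebra_simps sum.distrib sum_subtractf Psym)
    also have "\<dots> = (if a = b then 1 else 0) - P a b - P b a + P a b"
      using that by (simp add: dl Pidem)
    finally show ?thesis using Psym[of a b] by simp
  qed
  have Mc: "M (j,a) (k,b) = M1c j a k b + ((if a = b then 1 else 0) - P a b)" if "j \<in> I" "k \<in> I" "a \<in> R" "b \<in> R" for j a k b
    unfolding M_def using CM1 CM2 that by simp
  have Idpsd: "psd_on R Id"
    unfolding psd_on_def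
  proof (intro conjI ballI allI)
    fix i j show "Id i j = Id j i" by (simp add: Id_def)
  next
    fix x :: "nat \<Rightarrow> real"
    have "(\<Sum>i\<in>R. \<Sum>j\<in>R. x i * Id i j * x j) = (\<Sum>i\<in>R. x i * x i)" unfolding Id_def by (rule delta2[OF fR])
    then show "0 \<le> (\<Sum>i\<in>R. \<Sum>j\<in>R. x i * Id i j * x j)" by (simp add: sum_nonneg)
  qed
  have Mpsd: "psd_on (I\<times>R) M"
    unfolding M_def
  proof (rule psd_add)
    show "psd_on (I\<times>R) M1" by (rule psd_congr[OF Ypsd, where G=Gl]) (simp add: M1_def)
    show "psd_on (I\<times>R) M2" by (rule psd_congr[OF Idpsd, where G="\<lambda>p e. E e (snd p)"]) (simp add: M2_def case_prod_beta)
  qed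
  have M1diag: "M1c j a j b = P a b" if "j \<in> I" "a \<in> R" "b \<in> R" for j a b
  proof -
    have "M1c j a j b = (\<Sum>i\<in>I. \<Sum>l\<in>I. \<Sum>c\<in>R. (v i c * L i a) * (v l c * L l b))"
      unfolding M1c_def using gYR that(1) by (auto intro!: sum.cong simp: sum_distrib_left sum_distrib_right mult_ac)
    also have "\<dots> = (\<Sum>c\<in>R. (\<Sum>i\<in>I. v i c * L i a) * (\<Sum>l\<in>I. v l c * L l b))"
    proof -
      have "(\<Sum>i\<in>I. \<Sum>l\<in>I. \<Sum>c\<in>R. (v i c * L i a) * (v l c * L l b)) = (\<Sum>i\<in>I. \<Sum>c\<in>R. \<Sum>l\<in>I. (v i c * L i a) * (v l c * L l b))"
        by (rule sum.cong[OF refl], rule sum.swap)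
      also have "\<dots> = (\<Sum>c\<in>R. \<Sum>i\<in>I. \<Sum>l\<in>I. (v i c * L i a) * (v l c * L l b))" by (rule sum.swap)
      also have "\<dots> = (\<Sum>c\<in>R. (\<Sum>i\<in>I. v i c * L i a) * (\<Sum>l\<in>I. v l c * L l b))" by (simp add: sum_product)
      finally show ?thesis .
    qed
    also have "\<dots> = (\<Sum>c\<in>R. P a c * P c b)"
    proof -
      have pc: "(\<Sum>i\<in>I. v i c * L i a) = P a c" for c
      proof -
        have "(\<Sum>i\<in>I. v i c * L i a) = P c a" by (simp add: P_def Pm_def)
        then show ?thesis using Psym by simp
      qed
      have pc2: "(\<Sum>l\<in>I. v l c * L l b) = P c b" for c by (simp add: P_def Pm_def)
      show ?thesis by (simp only: pc pc2)
    qed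
    also have "\<dots> = P a b" using Pidem that by simp
    finally show ?thesis .
  qed
  have M1bs: "M1c j a k b = M1c j b k a" if "j \<in> I" "k \<in> I" for j a k b
  proof -
    have "M1c j b k a = (\<Sum>i\<in>I. \<Sum>l\<in>I. L i b * Y (i,j) (l,k) * L l a)"
      unfolding M1c_def by (simp add: sum_distrib_left mult.assoc)
    also have "\<dots> = (\<Sum>l\<in>I. \<Sum>i\<in>I. L i b * Y (i,j) (l,k) * L l a)" by (rule sum.swap)
    also have "\<dots> = (\<Sum>l\<in>I. \<Sum>i\<in>I. L l a * Y (l,j) (i,k) * L i b)"
      using s02 that by (auto intro!: sum.cong simp: mult_ac)
    also have "\<dots> = M1c j a k b"
      unfolding M1c_def by (simp add: sum_distrib_left mult.assoc)
    finally show ?thesis by simp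
  qed
  have MB: "M \<in> Bset N r"
    unfolding Bset_def I_def[symmetric] R_def[symmetric]
  proof (intro CollectI conjI ballI)
    show "psd_on (I\<times>R) M" by (rule Mpsd)
    fix i a b assume h: "i \<in> I" "a \<in> R" "b \<in> R"
    show "M (i,a) (i,b) = (if a = b then 1 else 0)" using Mc[OF h(1) h(1) h(2,3)] M1diag[OF h] by simp
  next
    fix i j a b assume h: "i \<in> I" "j \<in> I" "a \<in> R" "b \<in> R"
    show "M (i,a) (j,b) = M (i,b) (j,a)" using Mc[OF h(1,2,3,4)] Mc[OF h(1,2,4,3)] M1bs[OF h(1,2)] Psym[of a b] by auto
  qed
  have alpha: "(\<Sum>p\<in>I. (\<Sum>a\<in>R. v i a * L p a) * Y (p,j) (q,k)) = Y (i,j) (q,k)"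
    if h: "i \<in> I" "j \<in> I" "q \<in> I" "k \<in> I" for i j q k
  proof -
    define c where "c p = (\<Sum>a\<in>R. v i a * L p a) - (if p = i then 1 else 0)" for p
    have cz: "(\<Sum>p\<in>I. c p * v p b) = 0" if b: "b \<in> R" for b
    proof -
      have "(\<Sum>p\<in>I. (\<Sum>a\<in>R. v i a * L p a) * v p b) = (\<Sum>a\<in>R. v i a * (\<Sum>p\<in>I. v p b * L p a))"
        by (simp add: sum_distrib_left sum_distrib_right mult_ac, subst sum.swap, simp)
      also have "\<dots> = (\<Sum>a\<in>R. P b a * v i a)" by (simp add: P_def Pm_def mult.commute)
      also have "\<dots> = v i b" using Pv h(1) b by simp
      finally have e1: "(\<Sum>p\<in>I. (\<Sum>a\<in>R. v i a * L p a) * v p b) = v i b" .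
      have e2: "(\<Sum>p\<in>I. (if p = i then 1 else 0) * v p b) = v i b"
      proof -
        have "(\<Sum>p\<in>I. (if p = i then 1 else 0) * v p b) = (\<Sum>p\<in>I. if p = i then v p b else 0)" by (rule sum.cong) auto
        then show ?thesis using fI h(1) by simp
      qed
      show ?thesis unfolding c_def using e1 e2 by (simp add: left_diff_distrib sum_subtractf)
    qed
    have "(\<Sum>p\<in>I. c p * Y (p,j) (q,k)) = 0" by (rule kern[OF cz h(2,3,4)])
    moreover have "(\<Sum>p\<in>I. (if p = i then 1 else 0) * Y (p,j) (q,k)) = Y (i,j) (q,k)"
    proof -
      have "(\<Sum>p\<in>I. (if p = i then 1 else 0) * Y (p,j) (q,k)) = (\<Sum>p\<in>I. if p = i then Y (p,j) (q,k) else 0)" by (rule sum.cong) auto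
      then show ?thesis using fI h(1) by simp
    qed
    ultimately show ?thesis unfolding c_def by (simp add: left_diff_distrib sum_subtractf)
  qed
  have BFid: "Y (i,j) (k,l) = blockform r v M i j k l" if h: "i \<in> I" "j \<in> I" "k \<in> I" "l \<in> I" for i j k l
  proof -
    define \<alpha> where "\<alpha> p = (\<Sum>a\<in>R. v i a * L p a)" for p
    define \<beta> where "\<beta> q = (\<Sum>b\<in>R. v l b * L q b)" for q
    have "blockform r v M i j k l = (\<Sum>a\<in>R. \<Sum>b\<in>R. v i a * M1c j a k b * v l b) +
           (\<Sum>a\<in>R. \<Sum>b\<in>R. v i a * ((if a = b then 1 else 0) - P a b) * v l b)"
      unfolding blockform_def R_def[symmetric] using Mc h(2,3)
      by (simp add: distrib_left distrib_right sum.distrib)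
    also have "(\<Sum>a\<in>R. \<Sum>b\<in>R. v i a * ((if a = b then 1 else 0) - P a b) * v l b) = 0"
    proof -
      have "(\<Sum>a\<in>R. \<Sum>b\<in>R. v i a * ((if a = b then 1 else 0) - P a b) * v l b) =
            (\<Sum>a\<in>R. \<Sum>b\<in>R. v i a * (if a = b then 1 else 0) * v l b) - (\<Sum>a\<in>R. v i a * (\<Sum>b\<in>R. P a b * v l b))"
        by (simp add: right_diff_distrib left_diff_distrib sum_subtractf sum_distrib_left mult.assoc)
      also have "\<dots> = 0" using delta2[OF fR] Pv h(4) by simp
      finally show ?thesis .
    qed
    also have "(\<Sum>a\<in>R. \<Sum>b\<in>R. v i a * M1c j a k b * v l b) =
               (\<Sum>a\<in>R. \<Sum>b\<in>R. \<Sum>p\<in>I. \<Sum>q\<in>I. (v i a * L p a) * Y (p,j) (q,k) * (v l b * L q b))"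
      unfolding M1c_def by (simp add: sum_distrib_left sum_distrib_right mult_ac)
    also have "\<dots> = (\<Sum>p\<in>I. \<Sum>q\<in>I. \<Sum>a\<in>R. \<Sum>b\<in>R. (v i a * L p a) * Y (p,j) (q,k) * (v l b * L q b))"
      by (rule swap4[symmetric])
    also have "\<dots> = (\<Sum>p\<in>I. \<Sum>q\<in>I. \<alpha> p * Y (p,j) (q,k) * \<beta> q)"
      unfolding \<alpha>_def \<beta>_def triple_prod ..
    also have "\<dots> = (\<Sum>q\<in>I. (\<Sum>p\<in>I. \<alpha> p * Y (p,j) (q,k)) * \<beta> q)"
      by (subst sum.swap) (simp add: sum_distrib_right)
    also have "\<dots> = (\<Sum>q\<in>I. Y (i,j) (q,k) * \<beta> q)"
      unfolding \<alpha>_def using alpha h by (intro sum.cong refl) simp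
    also have "\<dots> = (\<Sum>q\<in>I. \<beta> q * Y (q,k) (i,j))"
      using Ysym h by (intro sum.cong refl) (simp add: mult.commute)
    also have "\<dots> = Y (l,k) (i,j)" unfolding \<beta>_def using alpha[of l k i j] h by simp
    also have "\<dots> = Y (i,j) (l,k)" using Ysym h by simp
    also have "\<dots> = Y (i,j) (k,l)" using s23 h by simp
    finally show ?thesis by simp
  qed
  have QV: "quadvec N r v M = (real N)\<^sup>2"
  proof -
    have "quadvec N r v M = (\<Sum>j\<in>I. \<Sum>k\<in>I. blockform r v M j j k k)"
      unfolding quadvec_nested blockform_def I_def ..
    also have "\<dots> = (\<Sum>j\<in>I. \<Sum>k\<in>I. 1)" using BFid Y1 by (intro sum.cong refl) (metis)
    also have "\<dots> = (real N)\<^sup>2" by (simp add: I_def power2_eq_square)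
    finally show ?thesis .
  qed
  show ?thesis
    using MB QV BFid unfolding I_def by blast
qed


theorem theorem1:
  fixes N r :: nat and v :: "nat \<Rightarrow> nat \<Rightarrow> real"
  shows
   "(gram r v \<in> E4 N \<longleftrightarrow>
       ((\<Sum>i\<in>{1..N}. \<Sum>a\<in>{1..r}. (v i a)\<^sup>2) = real N \<and>
        (\<exists>M\<in>Bset N r. quadvec N r v M = (real N)\<^sup>2))) \<and>
    (\<forall>Y. gram r v \<in> E4 N \<longrightarrow> pseudomoment4 N Y \<longrightarrow> extends4 N Y (gram r v) \<longrightarrow>
       (\<exists>M\<in>Bset N r. quadvec N r v M = (real N)\<^sup>2 \<and>
          (\<forall>i\<in>{1..N}. \<forall>j\<in>{1..N}. \<forall>k\<in>{1..N}. \<forall>l\<in>{1..N}.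
             Y (i,j) (k,l) = blockform r v M i j k l))) \<and>
    (\<forall>M. (\<Sum>i\<in>{1..N}. \<Sum>a\<in>{1..r}. (v i a)\<^sup>2) = real N \<longrightarrow> M \<in> Bset N r \<longrightarrow>
       quadvec N r v M = (real N)\<^sup>2 \<longrightarrow>
       pseudomoment4 N (\<lambda>(i,j) (k,l). blockform r v M i j k l) \<and>
       extends4 N (\<lambda>(i,j) (k,l). blockform r v M i j k l) (gram r v))"
proof -
  have PA: "\<forall>Y. gram r v \<in> E4 N \<longrightarrow> pseudomoment4 N Y \<longrightarrow> extends4 N Y (gram r v) \<longrightarrow>
       (\<exists>M\<in>Bset N r. quadvec N r v M = (real N)\<^sup>2 \<and>
          (\<forall>i\<in>{1..N}. \<forall>j\<in>{1..N}. \<forall>k\<in>{1..N}. \<forall>l\<in>{1..N}.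
             Y (i,j) (k,l) = blockform r v M i j k l))"
    using parta by blast
  have PB: "\<forall>M. (\<Sum>i\<in>{1..N}. \<Sum>a\<in>{1..r}. (v i a)\<^sup>2) = real N \<longrightarrow> M \<in> Bset N r \<longrightarrow>
       quadvec N r v M = (real N)\<^sup>2 \<longrightarrow>
       pseudomoment4 N (\<lambda>(i,j) (k,l). blockform r v M i j k l) \<and>
       extends4 N (\<lambda>(i,j) (k,l). blockform r v M i j k l) (gram r v)"
    using partb by blast
  have IFF: "gram r v \<in> E4 N \<longleftrightarrow>
       ((\<Sum>i\<in>{1..N}. \<Sum>a\<in>{1..r}. (v i a)\<^sup>2) = real N \<and>
        (\<exists>M\<in>Bset N r. quadvec N r v M = (real N)\<^sup>2))"
  proof
    assume E: "gram r v \<in> E4 N"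
    then obtain Y where Y: "pseudomoment4 N Y" and ext: "extends4 N Y (gram r v)"
      unfolding E4_def by blast
    have "\<exists>M\<in>Bset N r. quadvec N r v M = (real N)\<^sup>2" using parta[OF Y ext] by blast
    moreover have "(\<Sum>i\<in>{1..N}. \<Sum>a\<in>{1..r}. (v i a)\<^sup>2) = real N"
    proof -
      have g1: "(\<Sum>a\<in>{1..r}. (v i a)\<^sup>2) = 1" if i: "i \<in> {1..N}" for i
      proof -
        have one: "1 \<in> {1..N}" using i by auto
        have c2: "Y (1,1) (i,i) = Y (1,1) (1,1)" using Y i one unfolding pseudomoment4_def by blast
        have d1: "Y (1,1) (1,1) = 1" using Y one unfolding pseudomoment4_def by blast
        have "Y (1,1) (i,i) = Y (1,i) (1,i)" using Ysyms(2)[OF Y one i one i] .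
        moreover have "Y (1,i) (1,i) = gram r v i i" using ext i unfolding extends4_def by blast
        ultimately have "gram r v i i = 1" using c2 d1 by simp
        then show ?thesis by (simp add: gram_def power2_eq_square)
      qed
      have "(\<Sum>i\<in>{1..N}. \<Sum>a\<in>{1..r}. (v i a)\<^sup>2) = (\<Sum>i\<in>{1..N}. (1::real))"
        using g1 by (intro sum.cong refl) simp
      then show ?thesis by simp
    qed
    ultimately show "(\<Sum>i\<in>{1..N}. \<Sum>a\<in>{1..r}. (v i a)\<^sup>2) = real N \<and>
        (\<exists>M\<in>Bset N r. quadvec N r v M = (real N)\<^sup>2)" by blast
  next
    assume h: "(\<Sum>i\<in>{1..N}. \<Sum>a\<in>{1..r}. (v i a)\<^sup>2) = real N \<and>
        (\<exists>M\<in>Bset N r. quadvec N r v M = (real N)\<^sup>2)"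
    then obtain M where M: "M \<in> Bset N r" "quadvec N r v M = (real N)\<^sup>2" by blast
    have pb: "pseudomoment4 N (\<lambda>(i,j) (k,l). blockform r v M i j k l) \<and>
       extends4 N (\<lambda>(i,j) (k,l). blockform r v M i j k l) (gram r v)"
      using partb[OF conjunct1[OF h] M] .
    have sym: "\<forall>i\<in>{1..N}. \<forall>j\<in>{1..N}. gram r v i j = gram r v j i"
      by (simp add: gram_def mult.commute)
    show "gram r v \<in> E4 N" unfolding E4_def using sym pb by blast
  qed
  show ?thesis using IFF PA PB by blast
qed

end
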